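(* For every $g\ge1$ and every integer $c$ with $0\le c\le\lfloor g/2\rfloor$, the quantity \[ L_{g,p^c}=\prod_{i=1}^{g-2c}(p^i+(-1)^i)\cdot\prod_{i=1}^c(p^{4i-2}-1)\cdot\frac{\prod_{i=1}^g(p^{2i}-1)}{\prod_{i=1}^{2c}(p^{2i}-1)\prod_{i=1}^{g-2c}(p^{2i}-1)} \] is a polynomial in $p$ with coefficients in $\mathbb{Z}$, of degree $(g^2+4gc-8c^2+g-2c)/2$. Moreover, as $c$ ranges over $0\le c\le\lfloor g/2\rfloor$, this degree is minimal exactly for $c=0$ when $g$ is odd and exactly for $c=g/2$ when $g$ is even.
   Context: Here $p$ is regarded as an indeterminate (or a prime). *)

theory Defs
  imports "HOL-Computational_Algebra.Polynomial"
begin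

definition numer :: "nat \<Rightarrow> nat \<Rightarrow> int poly" where
  "numer g c =
     (\<Prod>i=1..g-2*c. monom 1 i + [:(-1)^i:]) *
     (\<Prod>i=1..c. monom 1 (4*i-2) - 1) *
     (\<Prod>i=1..g. monom 1 (2*i) - 1)"

definition denom :: "nat \<Rightarrow> nat \<Rightarrow> int poly" where
  "denom g c = (\<Prod>i=1..2*c. monom 1 (2*i) - 1) * (\<Prod>i=1..g-2*c. monom 1 (2*i) - 1)"

text \<open>L g c is the quotient (meaningful as L_{g,p^c} once denom divides numer).\<close>
definition Lpoly :: "nat \<Rightarrow> nat \<Rightarrow> int poly" where
  "Lpoly g c = numer g c div denom g c"

end

theory Submission
  imports Defs
begin

definition FF :: "nat \<Rightarrow> int poly" where
  "FF n = (\<Prod>i=1..n. monom 1 (2*i) - 1)"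

lemma FF_0: "FF 0 = 1" by (simp add: FF_def)

lemma FF_Suc: "FF (Suc n) = FF n * (monom 1 (2 * Suc n) - 1)"
  unfolding FF_def by (simp add: prod.nat_ivl_Suc' mult.commute)

lemma key_id: "(monom (1::int) (2*(a+b)) - 1) = monom 1 (2*b) * (monom 1 (2*a) - 1) + (monom 1 (2*b) - 1)"
  by (simp add: algebra_simps mult_monom)

lemma FF_dvd: "FF a * FF b dvd FF (a+b)"
proof (induction "a+b" arbitrary: a b)
  case 0 then show ?case by (simp add: FF_0)
next
  case (Suc n)
  show ?case
  proof (cases "a = 0 \<or> b = 0")
    case True then show ?thesis by (auto simp: FF_0)
  next
    case False
    then obtain a' b' where a: "a = Suc a'" and b: "b = Suc b'" by (meson not0_implies_Suc)
    have n: "n = a' + b + 0" "n = a + b'" using Suc.hyps a b by auto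
    have h1: "FF a' * FF b dvd FF n" using Suc.hyps(1)[of a' b] n by simp
    have h2: "FF a * FF b' dvd FF n" using Suc.hyps(1)[of a b'] n by simp
    have e: "FF (a+b) = FF n * (monom 1 (2*(a+b)) - 1)"
      using Suc.hyps(2) FF_Suc[of n] by simp
    also have "\<dots> = monom 1 (2*b) * (FF n * (monom 1 (2*a) - 1)) + FF n * (monom 1 (2*b) - 1)"
      by (simp add: key_id algebra_simps mult_monom)
    finally have e2: "FF (a+b) = monom 1 (2*b) * (FF n * (monom 1 (2*a) - 1)) + FF n * (monom 1 (2*b) - 1)" .
    have d1: "FF a * FF b dvd FF n * (monom 1 (2*a) - 1)"
    proof -
      have "FF a * FF b = (FF a' * FF b) * (monom 1 (2*a) - 1)"
        unfolding a FF_Suc by (simp add: ac_simps)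
      then show ?thesis using h1 by (metis mult_dvd_mono dvd_refl)
    qed
    have d2: "FF a * FF b dvd FF n * (monom 1 (2*b) - 1)"
    proof -
      have "FF a * FF b = (FF a * FF b') * (monom 1 (2*b) - 1)"
        unfolding b FF_Suc by (simp add: ac_simps)
      then show ?thesis using h2 by (metis mult_dvd_mono dvd_refl)
    qed
    show ?thesis unfolding e2 using d1 d2 by (simp add: dvd_add dvd_mult)
  qed
qed

lemma deg1: "n \<ge> 1 \<Longrightarrow> degree (monom (1::int) n - 1) = n"
proof -
  assume "n \<ge> 1"
  have "monom (1::int) n - 1 = monom 1 n + (-1)" by simp
  moreover have "degree (monom (1::int) n + (-1)) = n"
    using \<open>n \<ge> 1\<close> by (subst degree_add_eq_left) (auto simp: degree_monom_eq)
  ultimately show ?thesis by simp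
qed

lemma deg2: "i \<ge> 1 \<Longrightarrow> degree (monom (1::int) i + [:(-1)^i:]) = i"
  by (subst degree_add_eq_left) (auto simp: degree_monom_eq)

lemma nz1: "n \<ge> 1 \<Longrightarrow> monom (1::int) n - 1 \<noteq> 0"
  using deg1[of n] by auto

lemma nz1': "n \<ge> 1 \<Longrightarrow> monom (1::int) n \<noteq> 1"
proof
  assume "n \<ge> 1" "monom (1::int) n = 1"
  then have "degree (monom (1::int) n) = degree (1::int poly)" by simp
  then show False using \<open>n \<ge> 1\<close> by (simp add: degree_monom_eq)
qed

lemma degFF: "degree (FF n) = n * (n+1)"
proof -
  have "degree (FF n) = (\<Sum>i=1..n. 2*i)"
    unfolding FF_def
    by (subst degree_prod_eq_sum_degree) (auto simp: deg1 nz1' intro!: sum.cong)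
  also have "\<dots> = n*(n+1)" by (induction n) auto
  finally show ?thesis .
qed

lemma FF_nz: "FF n \<noteq> 0"
  unfolding FF_def using nz1' by auto

lemma nz2: "i \<ge> 1 \<Longrightarrow> monom (1::int) i + [:(-1)^i:] \<noteq> 0"
    using deg2 by (metis degree_0 not_one_le_zero)

lemma degA: "2 * degree (\<Prod>i=1..m. monom (1::int) i + [:(-1)^i:]) = m*(m+1)"
proof -
  have "degree (\<Prod>i=1..m. monom (1::int) i + [:(-1)^i:]) = (\<Sum>i=1..m. i)"
    by (subst degree_prod_eq_sum_degree) (auto simp: deg2 nz2 intro!: sum.cong)
  also have "2 * \<dots> = m*(m+1)" by (induction m) auto
  finally show ?thesis by simp
qed

lemma nzA: "(\<Prod>i=1..m. monom (1::int) i + [:(-1)^i:]) \<noteq> 0"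
proof -
  have "\<And>i. i \<ge> 1 \<Longrightarrow> monom (1::int) i + [:(-1)^i:] \<noteq> 0"
    using deg2 by (metis degree_0 not_one_le_zero)
  then show ?thesis by auto
qed

lemma degB: "degree (\<Prod>i=1..c. monom (1::int) (4*i-2) - 1) = 2*c*c"
proof -
  have "degree (\<Prod>i=1..c. monom (1::int) (4*i-2) - 1) = (\<Sum>i=1..c. 4*i-2)"
    by (subst degree_prod_eq_sum_degree) (auto simp: deg1 nz1' intro!: sum.cong)
  also have "\<dots> = 2*c*c" by (induction c) (auto simp: algebra_simps)
  finally show ?thesis .
qed

lemma nzB: "(\<Prod>i=1..c. monom (1::int) (4*i-2) - 1) \<noteq> 0"
  using nz1' by auto

lemma main_c:
  assumes "c \<le> g div 2"
  shows "denom g c dvd numer g c \<and>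
            2 * int (degree (Lpoly g c)) =
              int g ^ 2 + 4 * int g * int c - 8 * int c ^ 2 + int g - 2 * int c"
proof -
  define m where "m = g - 2*c"
  have g: "g = 2*c + m" using assms unfolding m_def by auto
  define A where "A = (\<Prod>i=1..m. monom (1::int) i + [:(-1)^i:])"
  define B where "B = (\<Prod>i=1..c. monom (1::int) (4*i-2) - 1)"
  have num: "numer g c = A * B * FF g" unfolding numer_def A_def B_def FF_def m_def by simp
  have den: "denom g c = FF (2*c) * FF m" unfolding denom_def FF_def m_def by simp
  have dv: "denom g c dvd numer g c" 
  proof -
    have "FF (2*c) * FF m dvd FF g" using FF_dvd[of "2*c" m] g by simp
    then show ?thesis unfolding num den by (rule dvd_mult)
  qed
  have nA: "A \<noteq> 0" unfolding A_def by (rule nzA)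
  have nB: "B \<noteq> 0" unfolding B_def by (rule nzB)
  have nn: "numer g c \<noteq> 0" unfolding num using nA nB FF_nz[of g] by simp
  have nd: "denom g c \<noteq> 0" unfolding den using FF_nz by simp
  have eq: "numer g c = denom g c * Lpoly g c" unfolding Lpoly_def using dv by simp
  have nL: "Lpoly g c \<noteq> 0" using eq nn by auto
  have "degree (numer g c) = degree (denom g c) + degree (Lpoly g c)"
    using eq nd nL by (simp add: degree_mult_eq)
  moreover have "degree (numer g c) = degree A + degree B + degree (FF g)"
    unfolding num using nA nB FF_nz[of g] by (simp add: degree_mult_eq)
  moreover have "degree (denom g c) = degree (FF (2*c)) + degree (FF m)"
    unfolding den using FF_nz by (simp add: degree_mult_eq)
  ultimately have "degree A + degree B + degree (FF g) = degree (FF (2*c)) + degree (FF m) + degree (Lpoly g c)"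
    by simp
  then have "2*degree A + 2*degree B + 2*degree (FF g) = 2*degree (FF (2*c)) + 2*degree (FF m) + 2*degree (Lpoly g c)"
    by simp
  then have "m*(m+1) + 4*c*c + 2*(g*(g+1)) = 2*((2*c)*(2*c+1)) + 2*(m*(m+1)) + 2*degree (Lpoly g c)"
    unfolding A_def B_def degA degB degFF by simp
  then have "int (m*(m+1) + 4*c*c + 2*(g*(g+1))) = int (2*((2*c)*(2*c+1)) + 2*(m*(m+1)) + 2*degree (Lpoly g c))"
    by simp
  then have "2 * int (degree (Lpoly g c)) = int m*(int m+1) + 4*int c*int c + 2*(int g*(int g+1)) - 2*((2*int c)*(2*int c+1)) - 2*(int m*(int m+1))"
    by (simp add: algebra_simps)
  moreover have "int g = 2 * int c + int m" using g by simp
  ultimately have "2 * int (degree (Lpoly g c)) = int g ^ 2 + 4 * int g * int c - 8 * int c ^ 2 + int g - 2 * int c"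
    by (simp add: algebra_simps power2_eq_square)
  then show ?thesis using dv by simp
qed

theorem lemma3p2:
  fixes g :: nat
  assumes "g \<ge> 1"
  shows "(\<forall>c \<le> g div 2.
            denom g c dvd numer g c \<and>
            2 * int (degree (Lpoly g c)) =
              int g ^ 2 + 4 * int g * int c - 8 * int c ^ 2 + int g - 2 * int c)
       \<and> (\<forall>c \<le> g div 2. c \<noteq> (if odd g then 0 else g div 2) \<longrightarrow>
            degree (Lpoly g (if odd g then 0 else g div 2)) < degree (Lpoly g c))"
proof (intro conjI allI impI)
  fix c assume "c \<le> g div 2"
  then show "denom g c dvd numer g c" using main_c by blast
next
  fix c assume "c \<le> g div 2"
  then show "2 * int (degree (Lpoly g c)) =
              int g ^ 2 + 4 * int g * int c - 8 * int c ^ 2 + int g - 2 * int c" using main_c by blast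
next
  fix c assume c: "c \<le> g div 2" and cn: "c \<noteq> (if odd g then 0 else g div 2)"
  define c0 where "c0 = (if odd g then 0 else g div 2)"
  have c0: "c0 \<le> g div 2" unfolding c0_def by auto
  have e1: "2 * int (degree (Lpoly g c)) =
              int g ^ 2 + 4 * int g * int c - 8 * int c ^ 2 + int g - 2 * int c" using main_c c by blast
  have e0: "2 * int (degree (Lpoly g c0)) =
              int g ^ 2 + 4 * int g * int c0 - 8 * int c0 ^ 2 + int g - 2 * int c0" using main_c c0 by blast
  have "int g ^ 2 + 4 * int g * int c0 - 8 * int c0 ^ 2 + int g - 2 * int c0
     < int g ^ 2 + 4 * int g * int c - 8 * int c ^ 2 + int g - 2 * int c"
  proof (cases "odd g")
    case True
    then have c00: "c0 = 0" unfolding c0_def by simp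
    have "c \<ge> 1" using cn True by simp
    have "2*c \<le> g - 1" using c True by (metis odd_two_times_div_two_nat mult_le_mono2 diff_Suc_1)
    then have h: "2 * int g - 4 * int c - 1 \<ge> 1" using True \<open>c \<ge> 1\<close> assms by linarith
    have "0 < (2 * int c) * (2 * int g - 4 * int c - 1)" using h \<open>c \<ge> 1\<close> by simp
    then show ?thesis unfolding c00 by (simp add: algebra_simps power2_eq_square)
  next
    case False
    then obtain h where gh: "g = 2*h" by blast
    then have c00: "c0 = h" unfolding c0_def using False by simp
    have "c < h" using c cn False gh by simp
    have "0 < (int h - int c) * (8 * int c + 2)" using \<open>c < h\<close> by simp
    then show ?thesis unfolding c00 gh by (simp add: algebra_simps power2_eq_square)
  qed
  then have "2 * int (degree (Lpoly g c0)) < 2 * int (degree (Lpoly g c))" using e0 e1 by simp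
  then show "degree (Lpoly g (if odd g then 0 else g div 2)) < degree (Lpoly g c)"
    unfolding c0_def[symmetric] by simp
qed

end
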